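(* The matrices $A=\begin{pmatrix}1&2&1\\1&1&0\\1&0&1\end{pmatrix}$ and $B=\begin{pmatrix}1&0&1&0&1\\0&1&1&1&0\\1&1&1&0&0\\1&0&0&0&1\\0&1&0&1&0\end{pmatrix}$ are balanced strong shift equivalent (in particular strong shift equivalent and unitally shift equivalent).
   Context: A rectangular $\{0,1\}$-matrix $D$ is a division matrix if every row contains at least one $1$ and every column contains exactly one $1$. For square $\mathbb{N}$-matrices $A,B$ with no zero rows, $B$ is an outsplit of $A$ if there are a division matrix $D$ and an $\mathbb{N}$-matrix $E$ with $A=DE$ and $B=ED$. $A$ and $B$ are balanced elementary strong shift equivalent if there are a division matrix $D$ and rectangular $\mathbb{N}$-matrices $R_A,R_B$ with $A=D^tR_A$, $B=D^tR_B$ and $R_AD^t=R_BD^t$. Balanced strong shift equivalence is the equivalence relation generated by balanced elementary strong shift equivalence and outsplits. Two square $\mathbb{N}$-matrices are unitally shift equivalent if there are $\ell\ge1$ and rectangular $\mathbb{N}$-matrices $R,S$ with $A^\ell=RS$, $B^\ell=SR$, $AR=RB$, $BS=SA$, and $m,k\in\mathbb{N}$ with $(B^t)^mR^t\underline1=(B^t)^{m+k}\underline1$ ($\underline1$ the all-ones column vector). *)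

theory Defs
  imports "Jordan_Normal_Form.Matrix"
begin

definition division_matrix :: "nat mat \<Rightarrow> bool" where
  "division_matrix D \<longleftrightarrow>
     (\<forall>i<dim_row D. \<forall>j<dim_col D. D $$ (i,j) \<in> {0,1}) \<and>
     (\<forall>i<dim_row D. \<exists>j<dim_col D. D $$ (i,j) = 1) \<and>
     (\<forall>j<dim_col D. \<exists>!i. i < dim_row D \<and> D $$ (i,j) = 1)"

definition no_zero_rows :: "nat mat \<Rightarrow> bool" where
  "no_zero_rows A \<longleftrightarrow> (\<forall>i<dim_row A. \<exists>j<dim_col A. A $$ (i,j) \<noteq> 0)"

definition sq_nzr :: "nat mat \<Rightarrow> bool" where
  "sq_nzr A \<longleftrightarrow> square_mat A \<and> no_zero_rows A"

definition outsplit :: "nat mat \<Rightarrow> nat mat \<Rightarrow> bool" where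
  "outsplit A B \<longleftrightarrow> sq_nzr A \<and> sq_nzr B \<and>
     (\<exists>D E. D \<in> carrier_mat (dim_row A) (dim_row B) \<and>
            E \<in> carrier_mat (dim_row B) (dim_row A) \<and>
            division_matrix D \<and> A = D * E \<and> B = E * D)"

definition balanced_elem_sse :: "nat mat \<Rightarrow> nat mat \<Rightarrow> bool" where
  "balanced_elem_sse A B \<longleftrightarrow> sq_nzr A \<and> sq_nzr B \<and>
     (\<exists>D RA RB. dim_col D = dim_row A \<and>
        RA \<in> carrier_mat (dim_row D) (dim_row A) \<and>
        RB \<in> carrier_mat (dim_row D) (dim_row A) \<and>
        division_matrix D \<and>
        A = transpose_mat D * RA \<and> B = transpose_mat D * RB \<and>
        RA * transpose_mat D = RB * transpose_mat D)"

definition balanced_sse :: "nat mat \<Rightarrow> nat mat \<Rightarrow> bool" where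
  "balanced_sse = equivclp (\<lambda>A B. balanced_elem_sse A B \<or> outsplit A B)"

definition elem_sse :: "nat mat \<Rightarrow> nat mat \<Rightarrow> bool" where
  "elem_sse A B \<longleftrightarrow> square_mat A \<and> square_mat B \<and>
     (\<exists>R S. R \<in> carrier_mat (dim_row A) (dim_row B) \<and>
            S \<in> carrier_mat (dim_row B) (dim_row A) \<and>
            A = R * S \<and> B = S * R)"

definition sse :: "nat mat \<Rightarrow> nat mat \<Rightarrow> bool" where
  "sse = equivclp elem_sse"

definition ones_vec :: "nat \<Rightarrow> nat vec" where
  "ones_vec n = vec n (\<lambda>_. 1)"

definition unital_se :: "nat mat \<Rightarrow> nat mat \<Rightarrow> bool" where
  "unital_se A B \<longleftrightarrow> square_mat A \<and> square_mat B \<and>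
     (\<exists>l R S m k. l \<ge> 1 \<and>
        R \<in> carrier_mat (dim_row A) (dim_row B) \<and>
        S \<in> carrier_mat (dim_row B) (dim_row A) \<and>
        A ^\<^sub>m l = R * S \<and> B ^\<^sub>m l = S * R \<and>
        A * R = R * B \<and> B * S = S * A \<and>
        (transpose_mat B ^\<^sub>m m) *\<^sub>v (transpose_mat R *\<^sub>v ones_vec (dim_row A)) =
        (transpose_mat B ^\<^sub>m (m + k)) *\<^sub>v ones_vec (dim_row B))"

definition matA :: "nat mat" where
  "matA = mat_of_rows_list 3 [[1,2,1],[1,1,0],[1,0,1]]"

definition matB :: "nat mat" where
  "matB = mat_of_rows_list 5
     [[1,0,1,0,1],[0,1,1,1,0],[1,1,1,0,0],[1,0,0,0,1],[0,1,0,1,0]]"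

end

theory Submission
  imports Defs
begin
lemma division_matrix_code:
  "division_matrix D \<longleftrightarrow>
     (\<forall>i\<in>set [0..<dim_row D]. \<forall>j\<in>set [0..<dim_col D]. D $$ (i,j) = 0 \<or> D $$ (i,j) = 1) \<and>
     (\<forall>i\<in>set [0..<dim_row D]. \<exists>j\<in>set [0..<dim_col D]. D $$ (i,j) = 1) \<and>
     (\<forall>j\<in>set [0..<dim_col D]. \<exists>i\<in>set [0..<dim_row D]. D $$ (i,j) = 1 \<and>
         (\<forall>i'\<in>set [0..<dim_row D]. D $$ (i',j) = 1 \<longrightarrow> i' = i))"
  unfolding division_matrix_def by (simp add: Ex1_def atLeast0LessThan lessThan_iff Ball_def Bex_def imp_conjL)
lemma no_zero_rows_code:
  "no_zero_rows A \<longleftrightarrow> (\<forall>i\<in>set [0..<dim_row A]. \<exists>j\<in>set [0..<dim_col A]. A $$ (i,j) \<noteq> 0)"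
  unfolding no_zero_rows_def by (simp add: atLeast0LessThan Ball_def Bex_def)

lemma sq_nzr_code:
  "sq_nzr A \<longleftrightarrow> dim_col A = dim_row A \<and> (\<forall>i\<in>set [0..<dim_row A]. \<exists>j\<in>set [0..<dim_col A]. A $$ (i,j) \<noteq> 0)"
  unfolding sq_nzr_def no_zero_rows_code by (auto simp: square_mat.simps)

lemma vec_eq_by_list: "list_of_vec v = list_of_vec w \<Longrightarrow> v = w"
  by (metis vec_list)

lemma outsplit_elem_sse: "outsplit A B \<Longrightarrow> elem_sse A B"
  unfolding outsplit_def elem_sse_def sq_nzr_def by blast
lemma balanced_sse_imp: "balanced_elem_sse A B \<Longrightarrow> sse A B"
proof -
  assume "balanced_elem_sse A B"
  then obtain D RA RB where h: "sq_nzr A" "sq_nzr B" "dim_col D = dim_row A"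
    "RA \<in> carrier_mat (dim_row D) (dim_row A)" "RB \<in> carrier_mat (dim_row D) (dim_row A)"
    "A = transpose_mat D * RA" "B = transpose_mat D * RB" "RA * transpose_mat D = RB * transpose_mat D"
    unfolding balanced_elem_sse_def by blast
  define X where "X = RA * transpose_mat D"
  have dA: "dim_row A = dim_col D" using h(3) by simp
  have dB: "dim_row B = dim_col D" using h(7) by simp
  have dX: "dim_row X = dim_row D" "dim_col X = dim_row D" unfolding X_def using h(4) by auto
  have sA: "square_mat A" "square_mat B" using h(1,2) unfolding sq_nzr_def by auto
  have sX: "square_mat X" using dX by (simp add: square_mat.simps)
  have cT: "transpose_mat D \<in> carrier_mat (dim_row A) (dim_row X)" using dA dX by auto
  have cT2: "transpose_mat D \<in> carrier_mat (dim_row B) (dim_row X)" using dB dX by auto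
  have cA: "RA \<in> carrier_mat (dim_row X) (dim_row A)" using h(4) dX by simp
  have cB: "RB \<in> carrier_mat (dim_row X) (dim_row B)" using h(5) dX dA dB by simp
  have XB: "X = RB * transpose_mat D" unfolding X_def using h(8) .
  have "elem_sse A X"
    unfolding elem_sse_def using sA sX cT cA h(6) X_def by blast
  moreover have "elem_sse X B"
    unfolding elem_sse_def using sA sX cT2 cB h(7) XB by blast
  ultimately show ?thesis unfolding sse_def
    by (meson equivclp_trans r_into_equivclp)
qed

lemma balanced_sse_sse: "balanced_sse A B \<Longrightarrow> sse A B"
  unfolding balanced_sse_def equivclp_def
proof (induction rule: rtranclp_induct)
  case base then show ?case by (simp add: sse_def)
next
  case (step y z)
  have "sse y z"
    using step(2) unfolding symclp_def
    by (metis balanced_sse_imp outsplit_elem_sse sse_def equivclp_sym r_into_equivclp)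
  then show ?case using step(3) unfolding sse_def by (meson equivclp_trans)
qed

lemma mat_eq_by_list:
  assumes "dim_row A = dim_row B" "dim_col A = dim_col B" "mat_to_list A = mat_to_list B"
  shows "A = B"
proof (rule eq_matI)
  fix i j assume ij: "i < dim_row B" "j < dim_col B"
  have "mat_to_list A ! i ! j = A $$ (i,j)" using ij assms(1,2) unfolding mat_to_list_def by simp
  moreover have "mat_to_list B ! i ! j = B $$ (i,j)" using ij unfolding mat_to_list_def by simp
  ultimately show "A $$ (i,j) = B $$ (i,j)" using assms(3) by simp
qed (use assms in auto)

lemma mat_eq_code: "A = B \<longleftrightarrow> dim_row A = dim_row B \<and> dim_col A = dim_col B \<and> mat_to_list A = mat_to_list B"
  using mat_eq_by_list by blast

lemma vec_eq_code: "v = w \<longleftrightarrow> list_of_vec v = list_of_vec w"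
  by (metis vec_list)
definition M1 :: "nat mat" where "M1 = mat_of_rows_list 4 [[0, 0, 1, 0], [1, 1, 1, 1], [1, 1, 1, 0], [1, 1, 0, 1]]"
definition D1 :: "nat mat" where "D1 = mat_of_rows_list 4 [[1, 1, 0, 0], [0, 0, 1, 0], [0, 0, 0, 1]]"
definition E1 :: "nat mat" where "E1 = mat_of_rows_list 3 [[0, 1, 0], [1, 1, 1], [1, 1, 0], [1, 0, 1]]"
definition M2 :: "nat mat" where "M2 = mat_of_rows_list 6 [[1, 0, 0, 1, 0, 1], [0, 0, 0, 1, 0, 0], [0, 1, 1, 0, 1, 0], [1, 1, 0, 1, 0, 1], [1, 0, 0, 0, 0, 1], [0, 1, 1, 0, 1, 0]]"
definition D2 :: "nat mat" where "D2 = mat_of_rows_list 6 [[0, 1, 0, 0, 0, 0], [1, 0, 0, 0, 0, 1], [0, 0, 0, 1, 0, 0], [0, 0, 1, 0, 1, 0]]"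
definition E2 :: "nat mat" where "E2 = mat_of_rows_list 4 [[0, 1, 1, 0], [0, 0, 1, 0], [1, 0, 0, 1], [1, 1, 1, 0], [0, 1, 0, 0], [1, 0, 0, 1]]"
definition Dm :: "nat mat" where "Dm = mat_of_rows_list 6 [[1, 0, 0, 0, 0, 0], [0, 1, 0, 0, 0, 0], [0, 0, 0, 1, 0, 0], [0, 0, 0, 0, 1, 0], [0, 0, 1, 0, 0, 1]]"
definition RAm :: "nat mat" where "RAm = mat_of_rows_list 6 [[1, 0, 0, 1, 0, 1], [0, 0, 0, 1, 0, 0], [1, 1, 0, 1, 0, 1], [1, 0, 0, 0, 0, 1], [0, 1, 1, 0, 1, 0]]"
definition RBm :: "nat mat" where "RBm = mat_of_rows_list 6 [[1, 0, 0, 1, 0, 1], [0, 0, 0, 1, 0, 0], [1, 1, 1, 1, 0, 0], [1, 0, 0, 0, 0, 1], [0, 1, 1, 0, 1, 0]]"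
definition M4 :: "nat mat" where "M4 = mat_of_rows_list 6 [[1, 0, 0, 1, 0, 1], [0, 0, 0, 1, 0, 0], [0, 1, 1, 0, 1, 0], [1, 1, 1, 1, 0, 0], [1, 0, 0, 0, 0, 1], [0, 1, 1, 0, 1, 0]]"
definition D5 :: "nat mat" where "D5 = mat_of_rows_list 6 [[1, 0, 0, 0, 0, 0], [0, 1, 1, 0, 0, 0], [0, 0, 0, 1, 0, 0], [0, 0, 0, 0, 1, 0], [0, 0, 0, 0, 0, 1]]"
definition E5 :: "nat mat" where "E5 = mat_of_rows_list 5 [[1, 0, 1, 0, 1], [0, 0, 1, 0, 0], [0, 1, 0, 1, 0], [1, 1, 1, 0, 0], [1, 0, 0, 0, 1], [0, 1, 0, 1, 0]]"
definition RR :: "nat mat" where "RR = mat_of_rows_list 5 [[4, 4, 4, 2, 2], [2, 2, 3, 1, 1], [2, 2, 2, 2, 2]]"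
definition SS :: "nat mat" where "SS = mat_of_rows_list 3 [[5, 6, 3], [5, 6, 3], [6, 7, 3], [3, 3, 2], [3, 3, 2]]"

lemmas mdefs = matA_def matB_def M1_def D1_def E1_def M2_def D2_def E2_def Dm_def RAm_def RBm_def
  M4_def D5_def E5_def 

lemma outsplit_intro:
  "sq_nzr A \<Longrightarrow> sq_nzr B \<Longrightarrow> D \<in> carrier_mat (dim_row A) (dim_row B) \<Longrightarrow>
   E \<in> carrier_mat (dim_row B) (dim_row A) \<Longrightarrow> division_matrix D \<Longrightarrow> A = D * E \<Longrightarrow> B = E * D
   \<Longrightarrow> outsplit A B"
  unfolding outsplit_def by blast

lemma bal_intro:
  "sq_nzr A \<Longrightarrow> sq_nzr B \<Longrightarrow> dim_col D = dim_row A \<Longrightarrow>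
   RA \<in> carrier_mat (dim_row D) (dim_row A) \<Longrightarrow> RB \<in> carrier_mat (dim_row D) (dim_row A) \<Longrightarrow>
   division_matrix D \<Longrightarrow> A = transpose_mat D * RA \<Longrightarrow> B = transpose_mat D * RB \<Longrightarrow>
   RA * transpose_mat D = RB * transpose_mat D \<Longrightarrow> balanced_elem_sse A B"
  unfolding balanced_elem_sse_def by blast

lemma pow_step: "A ^\<^sub>m n = P \<Longrightarrow> m = Suc n \<Longrightarrow> P * A = Q \<Longrightarrow> A ^\<^sub>m m = Q"
  by simp

lemma u4: "SS * RR = mat_of_rows_list 5 [[38, 38, 44, 22, 22], [38, 38, 44, 22, 22], [44, 44, 51, 25, 25], [22, 22, 25, 13, 13], [22, 22, 25, 13, 13]]" unfolding mdefs RR_def SS_def mat_eq_code by code_simp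

lemma pw_A_1: "(matA) ^\<^sub>m 1 = mat_of_rows_list 3 [[1, 2, 1], [1, 1, 0], [1, 0, 1]]"
  unfolding mdefs mat_eq_code by code_simp

lemma pw_A_2: "(matA) ^\<^sub>m 2 = mat_of_rows_list 3 [[4, 4, 2], [2, 3, 1], [2, 2, 2]]"
  by (rule pow_step[OF pw_A_1], simp, unfold mdefs mat_eq_code, code_simp)

lemma pw_A_3: "(matA) ^\<^sub>m 3 = mat_of_rows_list 3 [[10, 12, 6], [6, 7, 3], [6, 6, 4]]"
  by (rule pow_step[OF pw_A_2], simp, unfold mdefs mat_eq_code, code_simp)

lemma pw_A_4: "(matA) ^\<^sub>m 4 = mat_of_rows_list 3 [[28, 32, 16], [16, 19, 9], [16, 18, 10]]"
  by (rule pow_step[OF pw_A_3], simp, unfold mdefs mat_eq_code, code_simp)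

lemma pw_A_5: "(matA) ^\<^sub>m 5 = mat_of_rows_list 3 [[76, 88, 44], [44, 51, 25], [44, 50, 26]]"
  by (rule pow_step[OF pw_A_4], simp, unfold mdefs mat_eq_code, code_simp)

lemma pw_B_1: "(matB) ^\<^sub>m 1 = mat_of_rows_list 5 [[1, 0, 1, 0, 1], [0, 1, 1, 1, 0], [1, 1, 1, 0, 0], [1, 0, 0, 0, 1], [0, 1, 0, 1, 0]]"
  unfolding mdefs mat_eq_code by code_simp

lemma pw_B_2: "(matB) ^\<^sub>m 2 = mat_of_rows_list 5 [[2, 2, 2, 1, 1], [2, 2, 2, 1, 1], [2, 2, 3, 1, 1], [1, 1, 1, 1, 1], [1, 1, 1, 1, 1]]"
  by (rule pow_step[OF pw_B_1], simp, unfold mdefs mat_eq_code, code_simp)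

lemma pw_B_3: "(matB) ^\<^sub>m 3 = mat_of_rows_list 5 [[5, 5, 6, 3, 3], [5, 5, 6, 3, 3], [6, 6, 7, 3, 3], [3, 3, 3, 2, 2], [3, 3, 3, 2, 2]]"
  by (rule pow_step[OF pw_B_2], simp, unfold mdefs mat_eq_code, code_simp)

lemma pw_B_4: "(matB) ^\<^sub>m 4 = mat_of_rows_list 5 [[14, 14, 16, 8, 8], [14, 14, 16, 8, 8], [16, 16, 19, 9, 9], [8, 8, 9, 5, 5], [8, 8, 9, 5, 5]]"
  by (rule pow_step[OF pw_B_3], simp, unfold mdefs mat_eq_code, code_simp)

lemma pw_B_5: "(matB) ^\<^sub>m 5 = mat_of_rows_list 5 [[38, 38, 44, 22, 22], [38, 38, 44, 22, 22], [44, 44, 51, 25, 25], [22, 22, 25, 13, 13], [22, 22, 25, 13, 13]]"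
  by (rule pow_step[OF pw_B_4], simp, unfold mdefs mat_eq_code, code_simp)

lemma pw_tB_1: "(transpose_mat matB) ^\<^sub>m 1 = mat_of_rows_list 5 [[1, 0, 1, 1, 0], [0, 1, 1, 0, 1], [1, 1, 1, 0, 0], [0, 1, 0, 0, 1], [1, 0, 0, 1, 0]]"
  unfolding mdefs mat_eq_code by code_simp

lemma pw_tB_2: "(transpose_mat matB) ^\<^sub>m 2 = mat_of_rows_list 5 [[2, 2, 2, 1, 1], [2, 2, 2, 1, 1], [2, 2, 3, 1, 1], [1, 1, 1, 1, 1], [1, 1, 1, 1, 1]]"
  by (rule pow_step[OF pw_tB_1], simp, unfold mdefs mat_eq_code, code_simp)


lemma u5: "(1\<^sub>m 5 :: nat mat) *\<^sub>v (transpose_mat RR *\<^sub>v vec 3 (\<lambda>_. 1)) = mat_of_rows_list 5 [[2, 2, 2, 1, 1], [2, 2, 2, 1, 1], [2, 2, 3, 1, 1], [1, 1, 1, 1, 1], [1, 1, 1, 1, 1]] *\<^sub>v vec 5 (\<lambda>_. 1)"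
  unfolding RR_def vec_eq_code by code_simp
lemma u1: "matA * RR = RR * matB" unfolding mdefs RR_def mat_eq_code by code_simp
lemma u2: "matB * SS = SS * matA" unfolding mdefs SS_def mat_eq_code by code_simp
lemma u3: "RR * SS = mat_of_rows_list 3 [[76, 88, 44], [44, 51, 25], [44, 50, 26]]" unfolding mdefs RR_def SS_def mat_eq_code by code_simp

lemma step1: "outsplit matA M1"
  apply (rule outsplit_intro[of _ _ D1 E1])
  unfolding sq_nzr_code division_matrix_code mdefs mat_eq_code carrier_mat_def mem_Collect_eq by code_simp+

lemma step2: "outsplit M1 M2"
  apply (rule outsplit_intro[of _ _ D2 E2])
  unfolding sq_nzr_code division_matrix_code mdefs mat_eq_code carrier_mat_def mem_Collect_eq by code_simp+

lemma step3: "balanced_elem_sse M2 M4"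
  apply (rule bal_intro[of _ _ Dm RAm RBm])
  unfolding sq_nzr_code division_matrix_code mdefs mat_eq_code carrier_mat_def mem_Collect_eq by code_simp+

lemma step4: "outsplit matB M4"
  apply (rule outsplit_intro[of _ _ D5 E5])
  unfolding sq_nzr_code division_matrix_code mdefs mat_eq_code carrier_mat_def mem_Collect_eq by code_simp+

lemma bal: "balanced_sse matA matB"
proof -
  let ?r = "\<lambda>A B. balanced_elem_sse A B \<or> outsplit A B"
  have h1: "equivclp ?r matA M1" by (rule r_into_equivclp, rule disjI2, rule step1)
  have h2: "equivclp ?r M1 M2" by (rule r_into_equivclp, rule disjI2, rule step2)
  have h3: "equivclp ?r M2 M4" by (rule r_into_equivclp, rule disjI1, rule step3)
  have h4: "equivclp ?r M4 matB" by (rule equivclp_sym, rule r_into_equivclp, rule disjI2, rule step4)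
  show ?thesis unfolding balanced_sse_def
    by (rule equivclp_trans[OF equivclp_trans[OF equivclp_trans[OF h1 h2] h3] h4])
qed

lemma unital_intro:
  "square_mat A \<Longrightarrow> square_mat B \<Longrightarrow> l \<ge> 1 \<Longrightarrow>
        R \<in> carrier_mat (dim_row A) (dim_row B) \<Longrightarrow>
        S \<in> carrier_mat (dim_row B) (dim_row A) \<Longrightarrow>
        A ^\<^sub>m l = R * S \<Longrightarrow> B ^\<^sub>m l = S * R \<Longrightarrow>
        A * R = R * B \<Longrightarrow> B * S = S * A \<Longrightarrow>
        (transpose_mat B ^\<^sub>m m) *\<^sub>v (transpose_mat R *\<^sub>v ones_vec (dim_row A)) =
        (transpose_mat B ^\<^sub>m (m + k)) *\<^sub>v ones_vec (dim_row B) \<Longrightarrow> unital_se A B"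
  unfolding unital_se_def by blast


lemma unital: "unital_se matA matB"
proof (rule unital_intro[of _ _ 5 RR SS 0 2])
  show "square_mat matA" unfolding matA_def by (simp add: square_mat.simps mat_of_rows_list_def)
  show "square_mat matB" unfolding matB_def by (simp add: square_mat.simps mat_of_rows_list_def)
  show "(1::nat) \<le> 5" by simp
  show "RR \<in> carrier_mat (dim_row matA) (dim_row matB)" unfolding matA_def matB_def RR_def carrier_mat_def mem_Collect_eq by code_simp
  show "SS \<in> carrier_mat (dim_row matB) (dim_row matA)" unfolding matA_def matB_def SS_def carrier_mat_def mem_Collect_eq by code_simp
  show "matA ^\<^sub>m 5 = RR * SS" using pw_A_5 u3 by simp
  show "matB ^\<^sub>m 5 = SS * RR" using pw_B_5 u4 by simp
  show "matA * RR = RR * matB" by (rule u1)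
  show "matB * SS = SS * matA" by (rule u2)
  have e0: "transpose_mat matB ^\<^sub>m 0 = 1\<^sub>m 5" unfolding matB_def by (simp add: mat_of_rows_list_def numeral_eq_Suc)
  have o3: "ones_vec (dim_row matA) = vec 3 (\<lambda>_. 1)" unfolding matA_def ones_vec_def by (simp add: mat_of_rows_list_def numeral_eq_Suc)
  have o5: "ones_vec (dim_row matB) = vec 5 (\<lambda>_. 1)" unfolding matB_def ones_vec_def by (simp add: mat_of_rows_list_def numeral_eq_Suc)
  show "transpose_mat matB ^\<^sub>m 0 *\<^sub>v (transpose_mat RR *\<^sub>v ones_vec (dim_row matA)) =
    transpose_mat matB ^\<^sub>m (0 + 2) *\<^sub>v ones_vec (dim_row matB)"
    unfolding e0 o3 o5 add_0 pw_tB_2 by (rule u5)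
qed

theorem mainTheorem12:
  shows "balanced_sse matA matB \<and> sse matA matB \<and> unital_se matA matB"
  using bal balanced_sse_sse[OF bal] unital by (intro conjI)

end
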